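(* There is no $1$-dimensional freezing cellular automaton $F$ that simulates every $1$-dimensional freezing cellular automaton with neighborhood $\mathrm{VN}_1=\{-1,0,1\}$, even when simulations with arbitrary finite context $C$ are allowed.
   Context: A $d$-dimensional cellular automaton (CA) is $F=(d,Q,N,f)$ with $Q$ finite, $N\subset\mathbb{Z}^d$ finite, $f:Q^N\to Q$, global map $F(c)_z=f(c|_{z+N})$. A CA is freezing if there is a partial order $\preceq$ on $Q$ with $F(c)_z\preceq c_z$ for all $c,z$. Simulation: $F$ simulates $G$ (same dimension $d$) with slowdown $T>0$, rectangular block $B\subseteq\mathbb{Z}^d$ of size-vector $b$ and context $C$ (finite, $\vec0\in C$) if there is $\phi:Q_G^C\to Q_F^B$ such that $\bar\phi(c)_{bz+r}=\phi(c|_{z+C})_r$ ($bz$ componentwise) defines an injective map $\bar\phi$ with $\bar\phi(G(c))=F^T(\bar\phi(c))$ for all $c$. *)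

theory Defs
  imports Main
begin

text \<open>A local pattern in
  Q^N is represented as a function int => 'a that is undefined outside N.\<close>

definition restr :: "int set \<Rightarrow> (int \<Rightarrow> 'a) \<Rightarrow> (int \<Rightarrow> 'a)" where
  "restr N p = (\<lambda>n. if n \<in> N then p n else undefined)"

definition configs :: "'a set \<Rightarrow> (int \<Rightarrow> 'a) set" where
  "configs Q = {c. \<forall>z. c z \<in> Q}"

definition is_CA :: "'a set \<Rightarrow> int set \<Rightarrow> ((int \<Rightarrow> 'a) \<Rightarrow> 'a) \<Rightarrow> bool" where
  "is_CA Q N f \<longleftrightarrow> finite Q \<and> finite N \<and>
     (\<forall>p. (\<forall>n\<in>N. p n \<in> Q) \<longrightarrow> f (restr N p) \<in> Q)"

definition glob :: "int set \<Rightarrow> ((int \<Rightarrow> 'a) \<Rightarrow> 'a) \<Rightarrow> (int \<Rightarrow> 'a) \<Rightarrow> (int \<Rightarrow> 'a)" where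
  "glob N f c = (\<lambda>z. f (restr N (\<lambda>n. c (z + n))))"

definition freezing :: "'a set \<Rightarrow> int set \<Rightarrow> ((int \<Rightarrow> 'a) \<Rightarrow> 'a) \<Rightarrow> bool" where
  "freezing Q N f \<longleftrightarrow> (\<exists>R. partial_order_on Q R \<and>
     (\<forall>c\<in>configs Q. \<forall>z. (glob N f c z, c z) \<in> R))"

definition phibar :: "int \<Rightarrow> int set \<Rightarrow> ((int \<Rightarrow> 'b) \<Rightarrow> (int \<Rightarrow> 'a)) \<Rightarrow> (int \<Rightarrow> 'b) \<Rightarrow> (int \<Rightarrow> 'a)" where
  "phibar b C \<phi> c = (\<lambda>x. \<phi> (restr C (\<lambda>k. c (x div b + k))) (x mod b))"

definition simulates :: "'a set \<Rightarrow> int set \<Rightarrow> ((int \<Rightarrow> 'a) \<Rightarrow> 'a) \<Rightarrow>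
    'b set \<Rightarrow> int set \<Rightarrow> ((int \<Rightarrow> 'b) \<Rightarrow> 'b) \<Rightarrow> bool" where
  "simulates QF NF fF QG NG fG \<longleftrightarrow>
    (\<exists>(T::nat) (b::int) (C::int set) (\<phi>::(int \<Rightarrow> 'b) \<Rightarrow> (int \<Rightarrow> 'a)).
       T > 0 \<and> b > 0 \<and> finite C \<and> 0 \<in> C \<and>
       (\<forall>p. (\<forall>k\<in>C. p k \<in> QG) \<longrightarrow> (\<forall>r\<in>{0..<b}. \<phi> (restr C p) r \<in> QF)) \<and>
       inj_on (phibar b C \<phi>) (configs QG) \<and>
       (\<forall>c\<in>configs QG. phibar b C \<phi> (glob NG fG c) = (glob NF fF ^^ T) (phibar b C \<phi> c)))"

end

theory Submission
  imports Defs
begin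


definition fGn :: "(int \<Rightarrow> nat) \<Rightarrow> nat" where
  "fGn p = (if p 0 \<ge> 4 then p 0 - 1 else if p 0 = 3 then
     (if p (-1) = 1 \<or> p (-1) = 2 then p (-1) else 3) else 0)"

lemma glob_G: "glob {-1,0,1} fGn c z = (if c z \<ge> 4 then c z - 1 else if c z = 3 then
     (if c (z - 1) = 1 \<or> c (z - 1) = 2 then c (z - 1) else 3) else 0)"
  by (simp add: glob_def fGn_def restr_def)

lemma G_isCA: "N \<ge> 3 \<Longrightarrow> is_CA {0..N} {-1,0,1} fGn"
  unfolding is_CA_def by (auto simp: fGn_def restr_def)

lemma G_freezing: "N \<ge> 3 \<Longrightarrow> freezing {0..N} {-1,0,1} fGn"
  unfolding freezing_def
proof (intro exI[of _ "{(x,y). x \<in> {0..N} \<and> y \<in> {0..N} \<and> x \<le> y}"] conjI ballI allI)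
  show "partial_order_on {0..N} {(x,y). x \<in> {0..N} \<and> y \<in> {0..N} \<and> x \<le> y}"
    unfolding partial_order_on_def preorder_on_def refl_on_def trans_def antisym_def by auto
  fix c :: "int \<Rightarrow> nat" and z assume "N \<ge> 3" "c \<in> configs {0..N}"
  then show "(glob {-1,0,1} fGn c z, c z) \<in> {(x,y). x \<in> {0..N} \<and> y \<in> {0..N} \<and> x \<le> y}"
    unfolding configs_def glob_G by (auto simp: le_diff_conv, (metis le_SucI)+)
qed

lemma G_uniform: "m \<ge> 4 \<Longrightarrow> glob {-1,0,1} fGn (\<lambda>_. m) = (\<lambda>_. m - 1)"
  by (auto simp: glob_G)

lemma G_uniform_iter: "k + 3 \<le> m \<Longrightarrow> (glob {-1,0,1} fGn ^^ k) (\<lambda>_. m) = (\<lambda>_. m - k)"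
proof (induction k)
  case 0 then show ?case by simp
next
  case (Suc k)
  then have "(glob {-1,0,1} fGn ^^ Suc k) (\<lambda>_. m) = glob {-1,0,1} fGn (\<lambda>_. m - k)" by simp
  also have "\<dots> = (\<lambda>_. m - k - 1)" using Suc.prems by (intro G_uniform) simp
  finally show ?case by simp
qed

definition sig :: "nat \<Rightarrow> nat \<Rightarrow> int \<Rightarrow> nat" where
  "sig s k = (\<lambda>z. if z < 0 then 3 else if z < int k then 0 else if z = int k then s else 3)"

lemma G_sig: "s = 1 \<or> s = 2 \<Longrightarrow> glob {-1,0,1} fGn (sig s k) = sig s (Suc k)"
  by (rule ext) (auto simp: glob_G sig_def)

lemma G_sig_iter: "s = 1 \<or> s = 2 \<Longrightarrow> (glob {-1,0,1} fGn ^^ k) (sig s 0) = sig s k"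
  by (induction k) (auto simp: G_sig)

lemma sig_configs: "N \<ge> 3 \<Longrightarrow> s = 1 \<or> s = 2 \<Longrightarrow> sig s k \<in> configs {0..N}"
  by (auto simp: configs_def sig_def)



lemma glob_configs: "is_CA Q N f \<Longrightarrow> d \<in> configs Q \<Longrightarrow> glob N f d \<in> configs Q"
proof -
  assume ca: "is_CA Q N f" and d: "d \<in> configs Q"
  have "f (restr N (\<lambda>n. d (z + n))) \<in> Q" for z
  proof -
    have "\<forall>p. (\<forall>n\<in>N. p n \<in> Q) \<longrightarrow> f (restr N p) \<in> Q" using ca unfolding is_CA_def by simp
    moreover have "\<forall>n\<in>N. d (z + n) \<in> Q" using d unfolding configs_def by simp
    ultimately show ?thesis by simp
  qed
  then show ?thesis unfolding configs_def glob_def by simp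
qed

lemma iter_configs: "is_CA Q N f \<Longrightarrow> d \<in> configs Q \<Longrightarrow> (glob N f ^^ t) d \<in> configs Q"
  by (induction t) (auto intro: glob_configs)

lemma locality:
  assumes "\<forall>n\<in>N. \<bar>n\<bar> \<le> int r" "\<forall>x\<ge>a. d x = d' x"
  shows "\<forall>x \<ge> a + int r * int t. (glob N f ^^ t) d x = (glob N f ^^ t) d' x"
proof (induction t)
  case 0 then show ?case using assms(2) by simp
next
  case (Suc t)
  show ?case
  proof (intro allI impI)
    fix x assume x: "x \<ge> a + int r * int (Suc t)"
    have "restr N (\<lambda>n. (glob N f ^^ t) d (x + n)) = restr N (\<lambda>n. (glob N f ^^ t) d' (x + n))"
    proof (rule ext)
      fix n show "restr N (\<lambda>n. (glob N f ^^ t) d (x + n)) n = restr N (\<lambda>n. (glob N f ^^ t) d' (x + n)) n"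
      proof (cases "n \<in> N")
        case True
        then have "\<bar>n\<bar> \<le> int r" using assms(1) by auto
        moreover have "int r * int (Suc t) = int r * int t + int r" by (simp add: algebra_simps)
        ultimately have "x + n \<ge> a + int r * int t" using x by linarith
        then show ?thesis using Suc.IH True by (simp add: restr_def)
      qed (simp add: restr_def)
    qed
    then show "(glob N f ^^ Suc t) d x = (glob N f ^^ Suc t) d' x" by (simp add: glob_def)
  qed
qed

lemma periodic_glob:
  assumes "\<forall>x. d x = d (x mod b)"
  shows "\<forall>x. glob N f d x = glob N f d (x mod b)"
proof
  fix x
  have "(\<lambda>n. d (x + n)) = (\<lambda>n. d (x mod b + n))"
  proof
    fix n
    have "d (x + n) = d ((x + n) mod b)" using assms by (rule spec)
    also have "\<dots> = d ((x mod b + n) mod b)" by (simp add: mod_add_left_eq)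
    also have "\<dots> = d (x mod b + n)" using spec[OF assms, of "x mod b + n"] by (rule sym)
    finally show "d (x + n) = d (x mod b + n)" .
  qed
  then show "glob N f d x = glob N f d (x mod b)" by (simp add: glob_def)
qed

lemma periodic_iter:
  "\<forall>x. d x = d (x mod b) \<Longrightarrow> \<forall>x. (glob N f ^^ t) d x = (glob N f ^^ t) d (x mod b)"
proof (induction t)
  case (Suc t)
  then show ?case using periodic_glob[OF Suc.IH[OF Suc.prems]] by simp
qed simp

lemma stuck:
  fixes F :: "'a \<Rightarrow> 'a"
  assumes "(F ^^ Suc s) d = (F ^^ s) d"
  shows "(F ^^ (s + j)) d = (F ^^ s) d"
proof (induction j)
  case (Suc j)
  have "(F ^^ (s + Suc j)) d = F ((F ^^ (s + j)) d)" by simp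
  also have "\<dots> = F ((F ^^ s) d)" using Suc by simp
  also have "\<dots> = (F ^^ s) d" using assms by simp
  finally show ?case .
qed simp

definition hgt :: "'a set \<Rightarrow> 'a rel \<Rightarrow> 'a \<Rightarrow> nat" where
  "hgt Q R x = card {y \<in> Q. (y, x) \<in> R \<and> y \<noteq> x}"

lemma hgt_less:
  assumes "finite Q" "partial_order_on Q R" "(x, y) \<in> R" "x \<noteq> y"
  shows "hgt Q R x < hgt Q R y"
proof -
  have R: "R \<subseteq> Q \<times> Q" "trans R" "antisym R"
    using assms(2) unfolding partial_order_on_def preorder_on_def by auto
  have "{z \<in> Q. (z, x) \<in> R \<and> z \<noteq> x} \<subset> {z \<in> Q. (z, y) \<in> R \<and> z \<noteq> y}"
  proof
    show "{z \<in> Q. (z, x) \<in> R \<and> z \<noteq> x} \<subseteq> {z \<in> Q. (z, y) \<in> R \<and> z \<noteq> y}"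
    proof
      fix z assume z: "z \<in> {z \<in> Q. (z, x) \<in> R \<and> z \<noteq> x}"
      then have zy: "(z, y) \<in> R" using R(2) assms(3) unfolding trans_def by blast
      have "z \<noteq> y"
      proof
        assume "z = y"
        then have "x = y" using z assms(3) R(3) unfolding antisym_def by blast
        then show False using assms(4) by simp
      qed
      then show "z \<in> {z \<in> Q. (z, y) \<in> R \<and> z \<noteq> y}" using z zy by blast
    qed
    have "x \<in> Q" using R assms(3) by auto
    then show "{z \<in> Q. (z, x) \<in> R \<and> z \<noteq> x} \<noteq> {z \<in> Q. (z, y) \<in> R \<and> z \<noteq> y}"
    proof (intro notI)
      assume "{z \<in> Q. (z, x) \<in> R \<and> z \<noteq> x} = {z \<in> Q. (z, y) \<in> R \<and> z \<noteq> y}"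
      moreover have "x \<in> {z \<in> Q. (z, y) \<in> R \<and> z \<noteq> y}" using \<open>x \<in> Q\<close> assms(3,4) by simp
      ultimately show False by blast
    qed
  qed
  then show ?thesis unfolding hgt_def by (rule psubset_card_mono[rotated]) (use assms(1) in auto)
qed

lemma hgt_le:
  assumes "finite Q" "x \<in> Q"
  shows "hgt Q R x \<le> card Q - 1"
proof -
  have "{y \<in> Q. (y, x) \<in> R \<and> y \<noteq> x} \<subseteq> Q - {x}" by auto
  then have "hgt Q R x \<le> card (Q - {x})" unfolding hgt_def using assms by (intro card_mono) auto
  then show ?thesis using assms by simp
qed

lemma freeze_count:
  assumes CA: "is_CA Q N f" and po: "partial_order_on Q R"
    and fr: "\<forall>c\<in>configs Q. \<forall>z. (glob N f c z, c z) \<in> R"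
    and d: "d \<in> configs Q" and b: "b > 0" and per: "\<forall>x. d x = d (x mod b)"
    and ch: "(glob N f ^^ Suc t) d \<noteq> (glob N f ^^ t) d"
  shows "Suc t \<le> nat b * (card Q - 1)"
proof -
  define F where "F = glob N f"
  define Phi where "Phi = (\<lambda>e. \<Sum>z\<in>{0..<b}. hgt Q R (e z))"
  have fin: "finite Q" using CA by (simp add: is_CA_def)
  have all: "(F ^^ Suc s) d \<noteq> (F ^^ s) d" if "s \<le> t" for s
  proof
    assume "(F ^^ Suc s) d = (F ^^ s) d"
    from stuck[OF this, of "t - s"] stuck[OF this, of "Suc t - s"] that
    have "(F ^^ Suc t) d = (F ^^ t) d" by (simp add: Suc_diff_le)
    with ch show False by (simp add: F_def)
  qed
  have step: "Phi ((F ^^ Suc s) d) < Phi ((F ^^ s) d)" if "s \<le> t" for s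
  proof -
    let ?e = "(F ^^ s) d"
    have e: "?e \<in> configs Q" unfolding F_def by (rule iter_configs[OF CA d])
    have pe: "\<forall>x. ?e x = ?e (x mod b)" unfolding F_def by (rule periodic_iter[OF per])
    have pe': "\<forall>x. F ?e x = F ?e (x mod b)" unfolding F_def using periodic_glob[OF pe] F_def by simp
    have rel: "(F ?e z, ?e z) \<in> R" for z using fr e F_def by blast
    have le: "hgt Q R (F ?e z) \<le> hgt Q R (?e z)" for z
      using hgt_less[OF fin po rel[of z]] by (cases "F ?e z = ?e z") auto
    from all[OF that] obtain x where "F ?e x \<noteq> ?e x" by auto
    then have x: "F ?e (x mod b) \<noteq> ?e (x mod b)" using pe pe' by metis
    have xm: "x mod b \<in> {0..<b}" using b by simp
    have lt: "hgt Q R (F ?e (x mod b)) < hgt Q R (?e (x mod b))"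
      using hgt_less[OF fin po rel x] .
    have "Phi (F ?e) < Phi ?e" unfolding Phi_def
      by (rule sum_strict_mono_ex1) (use le xm lt in auto)
    then show ?thesis by simp
  qed
  have dec: "Phi ((F ^^ s) d) + s \<le> Phi d" if "s \<le> Suc t" for s
    using that
  proof (induction s)
    case (Suc s)
    then have "Phi ((F ^^ Suc s) d) < Phi ((F ^^ s) d)" by (intro step) simp
    with Suc show ?case by simp
  qed simp
  have "Phi d \<le> (\<Sum>z\<in>{0..<b}. card Q - 1)" unfolding Phi_def
  proof (rule sum_mono)
    fix z show "hgt Q R (d z) \<le> card Q - 1" using d fin hgt_le[of Q "d z" R] by (simp add: configs_def)
  qed
  also have "\<dots> = nat b * (card Q - 1)" by simp
  finally show ?thesis using dec[of "Suc t"] by simp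
qed


lemma arith1:
  fixes b K R :: int
  assumes b: "b > 0" and h: "\<forall>k::nat. b * (int k - K) < b * (K + 1) + R * int k"
    and R: "R \<ge> 0" and K: "K \<ge> 0"
  shows "b \<le> R"
proof (rule ccontr)
  assume "\<not> b \<le> R"
  then have bR: "b \<ge> R + 1" by simp
  define k where "k = (R + 1) * (2 * K + 1)"
  have k0: "k \<ge> 0" unfolding k_def using R K by simp
  have e: "k - (2*K+1) \<ge> 0" unfolding k_def using R K
    by (simp add: algebra_simps mult_nonneg_nonneg)
  from h[rule_format, of "nat k"] k0 have "b * (k - K) < b * (K + 1) + R * k" by simp
  then have 1: "b * (k - (2*K+1)) < R * k" by (simp add: algebra_simps)
  have "(R + 1) * (k - (2*K+1)) \<le> b * (k - (2*K+1))" using bR e by (rule mult_right_mono)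
  moreover have "(R + 1) * (k - (2*K+1)) = R * k" unfolding k_def by (simp add: algebra_simps)
  ultimately show False using 1 by simp
qed


theorem theorem9:
  shows "\<not> (\<exists>(QF :: 'a set) NF fF. is_CA QF NF fF \<and> freezing QF NF fF \<and>
            (\<forall>(QG :: nat set) fG. is_CA QG {-1, 0, 1} fG \<and> freezing QG {-1, 0, 1} fG
                \<longrightarrow> simulates QF NF fF QG {-1, 0, 1} fG))"
proof
  assume "\<exists>(QF :: 'a set) NF fF. is_CA QF NF fF \<and> freezing QF NF fF \<and>
            (\<forall>(QG :: nat set) fG. is_CA QG {-1, 0, 1} fG \<and> freezing QG {-1, 0, 1} fG
                \<longrightarrow> simulates QF NF fF QG {-1, 0, 1} fG)"
  then obtain QF :: "'a set" and NF fF where CA: "is_CA QF NF fF" and fr: "freezing QF NF fF"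
    and sim: "\<forall>(QG :: nat set) fG. is_CA QG {-1, 0, 1} fG \<and> freezing QG {-1, 0, 1} fG
                \<longrightarrow> simulates QF NF fF QG {-1, 0, 1} fG" by blast
  obtain R where po: "partial_order_on QF R"
    and frR: "\<forall>c\<in>configs QF. \<forall>z. (glob NF fF c z, c z) \<in> R"
    using fr unfolding freezing_def by blast
  have finN: "finite NF" using CA by (simp add: is_CA_def)
  define r where "r = nat (\<Sum>n\<in>NF. \<bar>n\<bar>)"
  have r: "\<forall>n\<in>NF. \<bar>n\<bar> \<le> int r"
  proof
    fix n assume "n \<in> NF"
    then have "\<bar>n\<bar> \<le> (\<Sum>n\<in>NF. \<bar>n\<bar>)" using finN by (intro member_le_sum) auto
    then show "\<bar>n\<bar> \<le> int r" unfolding r_def by simp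
  qed
  define q where "q = card QF"
  define N where "N = r * (q - 1) + 4"
  have N3: "N \<ge> 3" unfolding N_def by simp
  have "simulates QF NF fF {0..N} {-1, 0, 1} fGn"
    using sim G_isCA[OF N3] G_freezing[OF N3] by blast
  then obtain T b C \<phi> where T: "T > 0" and b: "b > (0::int)" and finC: "finite C"
    and phiQ: "\<forall>p. (\<forall>k\<in>C. p k \<in> {0..N}) \<longrightarrow> (\<forall>r\<in>{0..<b}. \<phi> (restr C p) r \<in> QF)"
    and inj: "inj_on (phibar b C \<phi>) (configs {0..N})"
    and comm: "\<forall>c\<in>configs {0..N}. phibar b C \<phi> (glob {-1, 0, 1} fGn c) = (glob NF fF ^^ T) (phibar b C \<phi> c)"
    unfolding simulates_def by blast
  define G where "G = glob {-1, 0, 1} fGn"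
  define F where "F = glob NF fF"
  define P where "P = phibar b C \<phi>"
  have iter: "P ((G ^^ k) c) = (F ^^ (k * T)) (P c)" if c: "c \<in> configs {0..N}" for k c
  proof (induction k)
    case (Suc k)
    have cf: "(G ^^ k) c \<in> configs {0..N}" unfolding G_def by (rule iter_configs[OF G_isCA[OF N3] c])
    have "P ((G ^^ Suc k) c) = P (G ((G ^^ k) c))" by simp
    also have "\<dots> = (F ^^ T) (P ((G ^^ k) c))" using comm cf unfolding P_def G_def F_def by blast
    also have "\<dots> = (F ^^ T) ((F ^^ (k * T)) (P c))" using Suc by simp
    also have "\<dots> = (F ^^ (Suc k * T)) (P c)" by (simp add: funpow_add)
    finally show ?case .
  qed simp
  have Pconf: "P c \<in> configs QF" if "c \<in> configs {0..N}" for c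
  proof -
    have "\<phi> (restr C (\<lambda>k. c (x div b + k))) (x mod b) \<in> QF" for x
      using phiQ[rule_format, of "\<lambda>k. c (x div b + k)" "x mod b"] that b by (simp add: configs_def)
    then show ?thesis unfolding P_def phibar_def configs_def by simp
  qed
  define n where "n = N - 3"
  have n: "n = r * (q - 1) + 1" unfolding n_def N_def by simp
  define u where "u = (\<lambda>_::int. N)"
  have uc: "u \<in> configs {0..N}" unfolding u_def configs_def by simp
  have "(G ^^ n) u = (\<lambda>_. 3)" unfolding G_def u_def n_def using G_uniform_iter[of "N - 3" N] N3 by simp
  moreover have "(G ^^ (n - 1)) u = (\<lambda>_. 4)" unfolding G_def u_def n_def using G_uniform_iter[of "N - 4" N] N3
    by (simp add: N_def)
  ultimately have "(G ^^ n) u \<noteq> (G ^^ (n - 1)) u" by (metis numeral_eq_iff semiring_norm(85) semiring_norm(87) semiring_norm(89))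
  moreover have "(G ^^ j) u \<in> configs {0..N}" for j
    unfolding G_def by (rule iter_configs[OF G_isCA[OF N3] uc])
  ultimately have "P ((G ^^ n) u) \<noteq> P ((G ^^ (n - 1)) u)"
    using inj unfolding P_def inj_on_def by blast
  then have dif: "(F ^^ (n * T)) (P u) \<noteq> (F ^^ ((n - 1) * T)) (P u)" using iter uc by simp
  define s where "s = (n - 1) * T"
  have sT: "s + T = n * T" unfolding s_def n by (simp add: algebra_simps)
  have chg: "(F ^^ Suc s) (P u) \<noteq> (F ^^ s) (P u)"
  proof
    assume "(F ^^ Suc s) (P u) = (F ^^ s) (P u)"
    from stuck[OF this, of T] sT dif show False unfolding s_def by simp
  qed
  have perU: "\<forall>x. P u x = P u (x mod b)" unfolding P_def phibar_def u_def by simp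
  have cnt: "Suc s \<le> nat b * (q - 1)"
    using freeze_count[OF CA po frR Pconf[OF uc] b perU] chg unfolding F_def q_def by blast
  obtain K :: nat where K: "\<forall>j\<in>C. \<bar>j\<bar> \<le> int K"
  proof
    show "\<forall>j\<in>C. \<bar>j\<bar> \<le> int (nat (\<Sum>j\<in>C. \<bar>j\<bar>))"
    proof
      fix j assume "j \<in> C"
      then have "\<bar>j\<bar> \<le> (\<Sum>j\<in>C. \<bar>j\<bar>)" using finC by (intro member_le_sum) auto
      then show "\<bar>j\<bar> \<le> int (nat (\<Sum>j\<in>C. \<bar>j\<bar>))" by simp
    qed
  qed
  have s12: "sig 1 k \<in> configs {0..N}" "sig 2 k \<in> configs {0..N}" for k
    using sig_configs N3 by auto
  have agree0: "\<forall>x \<ge> b * (int K + 1). P (sig 1 0) x = P (sig 2 0) x"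
  proof (intro allI impI)
    fix x assume x: "x \<ge> b * (int K + 1)"
    have "x div b \<ge> int K + 1"
    proof -
      have "b * (int K + 1) div b \<le> x div b" using x b by (intro zdiv_mono1) auto
      then show ?thesis using b by simp
    qed
    then have "restr C (\<lambda>k. sig 1 0 (x div b + k)) = restr C (\<lambda>k. sig 2 0 (x div b + k))"
      using K by (auto simp: restr_def sig_def fun_eq_iff)
    then show "P (sig 1 0) x = P (sig 2 0) x" unfolding P_def phibar_def by simp
  qed
  have speed: "\<forall>k::nat. b * (int k - int K) < b * (int K + 1) + int (r * T) * int k"
  proof
    fix k :: nat
    have loc: "\<forall>x \<ge> b * (int K + 1) + int r * int (k * T). (F ^^ (k * T)) (P (sig 1 0)) x = (F ^^ (k * T)) (P (sig 2 0)) x"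
      unfolding F_def by (rule locality[OF r agree0])
    have "sig 1 k \<noteq> sig 2 k" unfolding sig_def by (auto simp: fun_eq_iff)
    then have "P (sig 1 k) \<noteq> P (sig 2 k)" using inj s12 unfolding P_def inj_on_def by blast
    then obtain x where x: "P (sig 1 k) x \<noteq> P (sig 2 k) x" by auto
    have P1: "P (sig 1 k) = (F ^^ (k * T)) (P (sig 1 0))"
      using iter[OF s12(1)[of 0], of k] G_sig_iter[of 1 k] unfolding G_def by simp
    have P2: "P (sig 2 k) = (F ^^ (k * T)) (P (sig 2 0))"
      using iter[OF s12(2)[of 0], of k] G_sig_iter[of 2 k] unfolding G_def by simp
    have xlt: "x < b * (int K + 1) + int r * int (k * T)"
    proof (rule ccontr)
      assume "\<not> x < b * (int K + 1) + int r * int (k * T)"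
      then have "x \<ge> b * (int K + 1) + int r * int (k * T)" by simp
      then have "(F ^^ (k * T)) (P (sig 1 0)) x = (F ^^ (k * T)) (P (sig 2 0)) x" using loc by blast
      then show False using x P1 P2 by simp
    qed
    have "restr C (\<lambda>j. sig 1 k (x div b + j)) \<noteq> restr C (\<lambda>j. sig 2 k (x div b + j))"
      using x unfolding P_def phibar_def by auto
    then obtain j where j: "j \<in> C" "sig 1 k (x div b + j) \<noteq> sig 2 k (x div b + j)"
      unfolding restr_def by (auto simp: fun_eq_iff split: if_splits)
    then have "x div b + j = int k" unfolding sig_def by (auto split: if_splits)
    then have "x div b \<ge> int k - int K" using K j(1) by force
    then have "b * (int k - int K) \<le> b * (x div b)" using b by (intro mult_left_mono) auto
    also have "\<dots> \<le> x" using b mult_div_mod_eq[of b x] pos_mod_sign[of b x] by linarith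
    finally show "b * (int k - int K) < b * (int K + 1) + int (r * T) * int k"
      using xlt by (simp add: algebra_simps)
  qed
  have brT: "b \<le> int (r * T)" by (rule arith1[OF b speed]) auto
  have "Suc s \<le> nat b * (q - 1)" by (rule cnt)
  also have "\<dots> \<le> r * T * (q - 1)" using brT by (intro mult_right_mono) (simp add: nat_le_iff, simp)
  also have "\<dots> = s" unfolding s_def n by simp
  finally show False by simp
qed

end
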